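(* Asymptotically almost surely (as $n\to\infty$), $T\sim\mathcal{R}(n,2)$ has the property that every minimal feedback arc set of $T$ contains a matching of size $n-1$.
   Context: $\mathcal{R}(n,2)$ denotes the probability space of bipartite tournaments with vertex classes $A_1,A_2$, each of size $n$, where every edge between $A_1$ and $A_2$ is oriented independently and uniformly at random. A feedback arc set of a directed graph $T$ is a set of edges (viewed as a spanning subgraph) meeting every directed cycle; it is minimal if no proper subset of it is a feedback arc set. *)

theory Defs
  imports "HOL-Probability.Probability"
begin

(* Vertices: (False, i) for i < n form the class A_1, (True, j) for j < n form A_2.
   An orientation of the complete bipartite graph K_{n,n} is encoded by a set
   S \<subseteq> {..<n} \<times> {..<n}: the edge between (False,i) and (True,j) is oriented
   from A_1 to A_2 iff (i,j) \<in> S, otherwise from A_2 to A_1. *)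

type_synonym vert = "bool \<times> nat"

definition orientations :: "nat \<Rightarrow> (nat \<times> nat) set set" where
  "orientations n = Pow ({..<n} \<times> {..<n})"

definition bip_tournament :: "nat \<Rightarrow> (nat \<times> nat) set \<Rightarrow> (vert \<times> vert) set" where
  "bip_tournament n S =
     {((False, i), (True, j)) | i j. i < n \<and> j < n \<and> (i, j) \<in> S} \<union>
     {((True, j), (False, i)) | i j. i < n \<and> j < n \<and> (i, j) \<notin> S}"

definition directed_cycle :: "('a \<times> 'a) set \<Rightarrow> 'a list \<Rightarrow> bool" where
  "directed_cycle E vs \<longleftrightarrow> vs \<noteq> [] \<and> distinct vs \<and>
     (\<forall>i < length vs. (vs ! i, vs ! ((i + 1) mod length vs)) \<in> E)"

definition cycle_edges :: "'a list \<Rightarrow> ('a \<times> 'a) set" where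
  "cycle_edges vs = {(vs ! i, vs ! ((i + 1) mod length vs)) | i. i < length vs}"

definition feedback_arc_set :: "('a \<times> 'a) set \<Rightarrow> ('a \<times> 'a) set \<Rightarrow> bool" where
  "feedback_arc_set E F \<longleftrightarrow> F \<subseteq> E \<and>
     (\<forall>vs. directed_cycle E vs \<longrightarrow> cycle_edges vs \<inter> F \<noteq> {})"

definition minimal_feedback_arc_set :: "('a \<times> 'a) set \<Rightarrow> ('a \<times> 'a) set \<Rightarrow> bool" where
  "minimal_feedback_arc_set E F \<longleftrightarrow> feedback_arc_set E F \<and>
     (\<forall>F'. F' \<subset> F \<longrightarrow> \<not> feedback_arc_set E F')"

definition is_matching :: "('a \<times> 'a) set \<Rightarrow> bool" where
  "is_matching M \<longleftrightarrow> (\<forall>e \<in> M. \<forall>e' \<in> M. e \<noteq> e' \<longrightarrow>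
      {fst e, snd e} \<inter> {fst e', snd e'} = {})"

definition good_property :: "nat \<Rightarrow> (nat \<times> nat) set \<Rightarrow> bool" where
  "good_property n S \<longleftrightarrow> (\<forall>F. minimal_feedback_arc_set (bip_tournament n S) F \<longrightarrow>
      (\<exists>M \<subseteq> F. is_matching M \<and> card M = n - 1))"

end

theory Submission
  imports Defs "HOL-Real_Asymp.Real_Asymp"
begin



lemma hall:
  fixes A :: "'a set" and G :: "'a \<Rightarrow> 'b set"
  assumes "finite A" "\<forall>a\<in>A. finite (G a)" "\<forall>X\<subseteq>A. card X \<le> card (\<Union>(G ` X))"
  shows "\<exists>f. inj_on f A \<and> (\<forall>a\<in>A. f a \<in> G a)"
  using assms
proof (induction "card A" arbitrary: A G rule: less_induct)
  case less
  show ?case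
  proof (cases "A = {}")
    case True thus ?thesis by auto
  next
    case ne: False
    show ?thesis
    proof (cases "\<exists>X. X \<subseteq> A \<and> X \<noteq> {} \<and> X \<noteq> A \<and> card (\<Union>(G ` X)) \<le> card X")
      case True
      then obtain X where X: "X \<subseteq> A" "X \<noteq> {}" "X \<noteq> A" "card (\<Union>(G ` X)) \<le> card X" by blast
      have finX: "finite X" using X(1) less.prems(1) finite_subset by blast
      have cX: "card X < card A" using X less.prems(1) psubset_card_mono by blast
      obtain f1 where f1: "inj_on f1 X" "\<forall>a\<in>X. f1 a \<in> G a"
        using less.hyps[OF cX finX, of G] less.prems X(1) by auto
      define N where "N = \<Union>(G ` X)"
      have finN: "finite N" unfolding N_def using finX X(1) less.prems(2) by auto
      have cN: "card N = card X" proof -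
        have "card X \<le> card N" using less.prems(3) X(1) unfolding N_def by blast
        thus ?thesis using X(4) unfolding N_def by linarith
      qed
      define G2 where "G2 = (\<lambda>a. G a - N)"
      have cA2: "card (A - X) < card A"
        using X finX less.prems(1) by (metis card_Diff_subset card_gt_0_iff diff_less finite_subset ne)
      have hall2: "\<forall>Z\<subseteq>A-X. card Z \<le> card (\<Union>(G2 ` Z))"
      proof (intro allI impI)
        fix Z assume Z: "Z \<subseteq> A - X"
        have finZ: "finite Z" using Z less.prems(1) finite_subset by blast
        have e: "\<Union>(G2 ` Z) = \<Union>(G ` (Z \<union> X)) - N" by (auto simp: G2_def N_def)
        have c1: "card (\<Union>(G ` (Z \<union> X))) \<ge> card (Z \<union> X)" proof -
          have "Z \<union> X \<subseteq> A" using Z X(1) by blast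
          thus ?thesis using less.prems(3) by blast
        qed
        have c2: "card (Z \<union> X) = card Z + card X" using Z finZ finX by (subst card_Un_disjoint) auto
        have fin3: "finite (\<Union>(G ` (Z \<union> X)))" using Z X(1) less.prems(2) finZ finX by auto
        have sub: "N \<subseteq> \<Union>(G ` (Z \<union> X))" by (auto simp: N_def)
        have "card (\<Union>(G2 ` Z)) = card (\<Union>(G ` (Z \<union> X))) - card N"
          using e fin3 sub card_Diff_subset finN by metis
        thus "card Z \<le> card (\<Union>(G2 ` Z))" using c1 c2 cN by linarith
      qed
      have fin2: "\<forall>a\<in>A-X. finite (G2 a)" using less.prems(2) by (auto simp: G2_def)
      obtain f2 where f2: "inj_on f2 (A - X)" "\<forall>a\<in>A-X. f2 a \<in> G2 a"
        using less.hyps[OF cA2, of G2] less.prems(1) fin2 hall2 by auto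
      define f where "f = (\<lambda>a. if a \<in> X then f1 a else f2 a)"
      have "inj_on f A"
      proof (rule inj_onI)
        fix a b assume ab: "a \<in> A" "b \<in> A" "f a = f b"
        show "a = b"
        proof (cases "a \<in> X"; cases "b \<in> X")
          assume "a \<in> X" "b \<in> X" thus ?thesis using ab f1(1) by (auto simp: f_def inj_on_def)
        next
          assume "a \<notin> X" "b \<notin> X" thus ?thesis using ab f2(1) by (auto simp: f_def inj_on_def)
        next
          assume "a \<in> X" "b \<notin> X"
          hence "f a \<in> N" using f1 by (auto simp: f_def N_def)
          moreover have "f b \<notin> N" using f2 ab(2) \<open>b \<notin> X\<close> by (auto simp: f_def G2_def)
          ultimately show ?thesis using ab(3) by simp
        next
          assume "a \<notin> X" "b \<in> X"
          hence "f b \<in> N" using f1 by (auto simp: f_def N_def)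
          moreover have "f a \<notin> N" using f2 ab(1) \<open>a \<notin> X\<close> by (auto simp: f_def G2_def)
          ultimately show ?thesis using ab(3) by simp
        qed
      qed
      moreover have "\<forall>a\<in>A. f a \<in> G a" using f1 f2 by (auto simp: f_def G2_def)
      ultimately show ?thesis by blast
    next
      case False
      hence strict: "\<And>X. X \<subseteq> A \<Longrightarrow> X \<noteq> {} \<Longrightarrow> X \<noteq> A \<Longrightarrow> card X < card (\<Union>(G ` X))"
        by (meson not_le)
      obtain a where a: "a \<in> A" using ne by blast
      have "{a} \<subseteq> A" using a by simp
      have "card {a} \<le> card (\<Union>(G ` {a}))" using less.prems(3)[rule_format, OF \<open>{a} \<subseteq> A\<close>] .
      hence "G a \<noteq> {}" by auto
      then obtain b where b: "b \<in> G a" by blast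
      define G2 where "G2 = (\<lambda>x. G x - {b})"
      have cA2: "card (A - {a}) < card A" proof -
        have "card A > 0" using a less.prems(1) card_gt_0_iff by blast
        moreover have "card (A - {a}) = card A - 1" using a by simp
        ultimately show ?thesis by linarith
      qed
      have hall2: "\<forall>Z\<subseteq>A-{a}. card Z \<le> card (\<Union>(G2 ` Z))"
      proof (intro allI impI)
        fix Z assume Z: "Z \<subseteq> A - {a}"
        show "card Z \<le> card (\<Union>(G2 ` Z))"
        proof (cases "Z = {}")
          case True thus ?thesis by simp
        next
          case False
          have finZ: "finite Z" using Z less.prems(1) finite_subset by blast
          have "card Z < card (\<Union>(G ` Z))" using strict[of Z] Z a False by auto
          moreover have "\<Union>(G2 ` Z) = \<Union>(G ` Z) - {b}" by (auto simp: G2_def)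
          moreover have "finite (\<Union>(G ` Z))" using finZ Z less.prems(2) by auto
          moreover have "card (\<Union>(G ` Z)) \<le> card (\<Union>(G ` Z) - {b}) + 1"
            by (simp add: card_Diff_singleton_if) arith
          ultimately show ?thesis by simp
        qed
      qed
      have fin2: "\<forall>x\<in>A-{a}. finite (G2 x)" using less.prems(2) by (auto simp: G2_def)
      obtain f2 where f2: "inj_on f2 (A - {a})" "\<forall>x\<in>A-{a}. f2 x \<in> G2 x"
        using less.hyps[OF cA2, of G2] less.prems(1) fin2 hall2 by auto
      define f where "f = f2(a := b)"
      have "inj_on f A" using f2 unfolding f_def inj_on_def G2_def by auto
      moreover have "\<forall>x\<in>A. f x \<in> G x" using f2 b by (auto simp: f_def G2_def)
      ultimately show ?thesis by blast
    qed
  qed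
qed




lemma card_blocks:
  assumes "finite J" "finite U" "\<forall>j\<in>J. D j \<subseteq> U" "\<forall>j\<in>J. G j \<subseteq> Pow (D j)"
    "\<forall>i\<in>J. \<forall>j\<in>J. i \<noteq> j \<longrightarrow> D i \<inter> D j = {}"
  shows "card {S\<in>Pow U. \<forall>j\<in>J. S \<inter> D j \<in> G j} * 2^(\<Sum>j\<in>J. card (D j))
         = (\<Prod>j\<in>J. card (G j)) * 2^card U"
  using assms
proof (induction J arbitrary: U rule: finite_induct)
  case empty
  have "{S\<in>Pow U. \<forall>j\<in>{}. S \<inter> D j \<in> G j} = Pow U" by auto
  thus ?case using empty.prems(1) by (simp add: card_Pow)
next
  case (insert j J)
  define U' where "U' = U - D j"
  define E' where "E' = {S\<in>Pow U'. \<forall>i\<in>J. S \<inter> D i \<in> G i}"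
  have finU': "finite U'" using insert.prems(1) by (simp add: U'_def)
  have DJ: "\<forall>i\<in>J. D i \<subseteq> U'"
  proof
    fix i assume i: "i \<in> J"
    hence "i \<noteq> j" using insert.hyps(2) by auto
    hence "D i \<inter> D j = {}" using insert.prems(4) i by auto
    moreover have "D i \<subseteq> U" using insert.prems(2) i by auto
    ultimately show "D i \<subseteq> U'" unfolding U'_def by blast
  qed
  have IH: "card E' * 2^(\<Sum>i\<in>J. card (D i)) = (\<Prod>i\<in>J. card (G i)) * 2^card U'"
    unfolding E'_def using insert.IH[OF finU' DJ] insert.prems(3,4) by auto
  have Dj: "D j \<subseteq> U" using insert.prems(2) by auto
  have Gj: "G j \<subseteq> Pow (D j)" using insert.prems(3) by auto
  have disj: "\<forall>i\<in>J. D i \<inter> D j = {}"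
  proof
    fix i assume i: "i \<in> J"
    hence "i \<noteq> j" using insert.hyps(2) by auto
    thus "D i \<inter> D j = {}" using insert.prems(4) i by auto
  qed
  have eq: "{S\<in>Pow U. \<forall>i\<in>insert j J. S \<inter> D i \<in> G i} = (\<lambda>(T,S'). T \<union> S') ` (G j \<times> E')"
  proof (rule set_eqI, rule iffI)
    fix S assume S: "S \<in> {S\<in>Pow U. \<forall>i\<in>insert j J. S \<inter> D i \<in> G i}"
    have "S \<inter> D j \<in> G j" using S by auto
    moreover have "S - D j \<in> E'"
    proof -
      have "S - D j \<in> Pow U'" using S by (auto simp: U'_def)
      moreover have "(S - D j) \<inter> D i \<in> G i" if "i \<in> J" for i
      proof -
        have "(S - D j) \<inter> D i = S \<inter> D i" using disj that by blast
        thus ?thesis using S that by auto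
      qed
      ultimately show ?thesis by (auto simp: E'_def)
    qed
    moreover have "S = (\<lambda>(T,S'). T \<union> S') (S \<inter> D j, S - D j)" by auto
    ultimately show "S \<in> (\<lambda>(T,S'). T \<union> S') ` (G j \<times> E')"
      by (intro image_eqI[where x="(S \<inter> D j, S - D j)"]) simp_all
  next
    fix S assume "S \<in> (\<lambda>(T,S'). T \<union> S') ` (G j \<times> E')"
    then obtain T S' where TS: "T \<in> G j" "S' \<in> E'" "S = T \<union> S'" by auto
    have T: "T \<subseteq> D j" using TS(1) Gj by auto
    have S': "S' \<subseteq> U'" "\<forall>i\<in>J. S' \<inter> D i \<in> G i" using TS(2) by (auto simp: E'_def)
    have "S \<subseteq> U" using T S' Dj TS(3) by (auto simp: U'_def)
    moreover have "S \<inter> D j = T" using T S'(1) TS(3) by (auto simp: U'_def)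
    moreover have "S \<inter> D i = S' \<inter> D i" if "i \<in> J" for i using T disj that TS(3) by blast
    ultimately show "S \<in> {S\<in>Pow U. \<forall>i\<in>insert j J. S \<inter> D i \<in> G i}" using TS(1) S'(2) by auto
  qed
  have inj: "inj_on (\<lambda>(T,S'). T \<union> S') (G j \<times> E')"
  proof (rule inj_onI, clarify)
    fix T1 S1 T2 S2 assume a: "T1 \<in> G j" "S1 \<in> E'" "T2 \<in> G j" "S2 \<in> E'" "T1 \<union> S1 = T2 \<union> S2"
    have "T1 \<subseteq> D j" "T2 \<subseteq> D j" using a Gj by auto
    moreover have "S1 \<inter> D j = {}" "S2 \<inter> D j = {}" using a by (auto simp: E'_def U'_def)
    ultimately have "T1 = (T1 \<union> S1) \<inter> D j" "T2 = (T2 \<union> S2) \<inter> D j"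
      "S1 = (T1 \<union> S1) - D j" "S2 = (T2 \<union> S2) - D j" by blast+
    thus "T1 = T2 \<and> S1 = S2" using a(5) by metis
  qed
  have cE: "card {S\<in>Pow U. \<forall>i\<in>insert j J. S \<inter> D i \<in> G i} = card (G j) * card E'"
    unfolding eq using card_image[OF inj] by (simp add: card_cartesian_product)
  have finDj: "finite (D j)" using Dj insert.prems(1) finite_subset by blast
  have cU: "card U = card (D j) + card U'" unfolding U'_def using Dj finDj insert.prems(1)
    by (metis card_Diff_subset card_mono le_add_diff_inverse)
  have "card {S\<in>Pow U. \<forall>i\<in>insert j J. S \<inter> D i \<in> G i} * 2^(\<Sum>i\<in>insert j J. card (D i))
      = card (G j) * (card E' * 2^(\<Sum>i\<in>J. card (D i))) * 2^card (D j)"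
    unfolding cE using insert.hyps by (simp add: power_add)
  also have "\<dots> = (\<Prod>i\<in>insert j J. card (G i)) * 2^card U"
    using insert.hyps by (simp add: IH cU power_add)
  finally show ?case .
qed




definition Ev :: "(nat\<times>nat \<Rightarrow> nat\<times>nat) \<Rightarrow> nat \<Rightarrow> nat list \<Rightarrow> nat set \<Rightarrow> (nat\<times>nat) set set" where
  "Ev \<sigma> k xs Y0 = {S. \<forall>i<k. \<forall>y\<in>Y0. \<not> (\<sigma> (xs!i, y) \<in> S \<and> \<sigma> (xs!(k+i), y) \<notin> S)}"

lemma helper: "(S \<inter> {p,q} \<in> {T \<in> Pow {p,q}. \<not>(p\<in>T \<and> q\<notin>T)}) = (\<not>(p\<in>S \<and> q\<notin>S))" by auto
lemma seteq_lemma: "{S\<in>Pow U. \<forall>j\<in>{..<k} \<times> Y0. S \<inter> (\<lambda>(i,y). {\<sigma> (xs!i, y), \<sigma> (xs!(k+i), y)}) j \<in> 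
   (\<lambda>(i,y). {T \<in> Pow {\<sigma> (xs!i, y), \<sigma> (xs!(k+i), y)}. \<not> (\<sigma> (xs!i, y) \<in> T \<and> \<sigma> (xs!(k+i), y) \<notin> T)}) j} = Pow U \<inter> Ev \<sigma> k xs Y0"
proof -
  have "(\<forall>j\<in>{..<k} \<times> Y0. S \<inter> (\<lambda>(i,y). {\<sigma> (xs!i, y), \<sigma> (xs!(k+i), y)}) j \<in> 
   (\<lambda>(i,y). {T \<in> Pow {\<sigma> (xs!i, y), \<sigma> (xs!(k+i), y)}. \<not> (\<sigma> (xs!i, y) \<in> T \<and> \<sigma> (xs!(k+i), y) \<notin> T)}) j)
    = (S \<in> Ev \<sigma> k xs Y0)" for S
    unfolding Ev_def by (simp only: split_paired_Ball_Sigma prod.case helper) auto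
  thus ?thesis by blast
qed

lemma card_le3: "card {T \<in> Pow {p, q}. \<not> (p \<in> T \<and> q \<notin> T)} \<le> 3"
proof -
  have "{T \<in> Pow {p, q}. \<not> (p \<in> T \<and> q \<notin> T)} \<subseteq> {{}, {q}, {p,q}}" by auto
  moreover have "card {{}, {q}, {p,q}} \<le> (3::nat)"
    by (simp add: card_insert_if)
  ultimately show ?thesis by (meson card_mono finite.emptyI finite.insertI order_trans)
qed

lemma ev_bound:
  fixes \<sigma> :: "nat\<times>nat \<Rightarrow> nat\<times>nat"
  assumes inj: "inj \<sigma>" and sU: "\<forall>p \<in> {..<n}\<times>{..<n}. \<sigma> p \<in> {..<n}\<times>{..<n}"
    and xs: "distinct xs" "length xs = 2*k" "set xs \<subseteq> {..<n}" and Y0: "Y0 \<subseteq> {..<n}"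
  shows "real (card (Pow ({..<n}\<times>{..<n}) \<inter> Ev \<sigma> k xs Y0)) \<le> 2^(n*n) * (3/4)^(k * card Y0)"
proof -
  define U where "U = {..<n}\<times>{..<n}"
  define J where "J = {..<k} \<times> Y0"
  define D where "D = (\<lambda>(i,y). {\<sigma> (xs!i, y), \<sigma> (xs!(k+i), y)})"
  define G where "G = (\<lambda>(i,y). {T \<in> Pow {\<sigma> (xs!i, y), \<sigma> (xs!(k+i), y)}. \<not> (\<sigma> (xs!i, y) \<in> T \<and> \<sigma> (xs!(k+i), y) \<notin> T)})"
  have finJ: "finite J" unfolding J_def using Y0 finite_subset by blast
  have finU: "finite U" unfolding U_def by simp
  have DU: "\<forall>j\<in>J. D j \<subseteq> U"
  proof
    fix j assume "j \<in> J"
    then obtain i y where j: "j = (i,y)" "i < k" "y \<in> Y0" unfolding J_def by auto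
    have "i < length xs" "k+i < length xs" using xs(2) j(2) by auto
    hence "xs!i \<in> set xs" "xs!(k+i) \<in> set xs" by (auto intro: nth_mem)
    hence "xs!i < n" "xs!(k+i) < n" using xs(3) by auto
    thus "D j \<subseteq> U" using sU j Y0 unfolding D_def U_def by auto
  qed
  have GD: "\<forall>j\<in>J. G j \<subseteq> Pow (D j)" unfolding G_def D_def by auto
  have disj: "\<forall>i\<in>J. \<forall>j\<in>J. i \<noteq> j \<longrightarrow> D i \<inter> D j = {}"
  proof (intro ballI impI)
    fix a b assume a: "a \<in> J" and b: "b \<in> J" and ab: "a \<noteq> b"
    obtain i y where ij: "a = (i,y)" "i < k" using a unfolding J_def by auto
    obtain i' y' where ij': "b = (i',y')" "i' < k" using b unfolding J_def by auto
    have key: "xs!p = xs!q \<Longrightarrow> p < 2*k \<Longrightarrow> q < 2*k \<Longrightarrow> p = q" for p q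
      using xs(1,2) nth_eq_iff_index_eq by metis
    show "D a \<inter> D b = {}"
    proof (rule ccontr)
      assume "D a \<inter> D b \<noteq> {}"
      then obtain z where z: "z \<in> D a" "z \<in> D b" by blast
      obtain p where p: "p \<in> {i, k+i}" "z = \<sigma> (xs!p, y)" using z(1) unfolding D_def ij by auto
      obtain q where q: "q \<in> {i', k+i'}" "z = \<sigma> (xs!q, y')" using z(2) unfolding D_def ij' by auto
      have pq: "p \<in> {i, k+i}" "q \<in> {i', k+i'}" "\<sigma> (xs!p, y) = \<sigma> (xs!q, y')" using p q by auto
      hence "xs!p = xs!q" "y = y'" using inj by (auto dest: injD)
      moreover have "p < 2*k" "q < 2*k" using pq(1,2) ij(2) ij'(2) by auto
      ultimately have "p = q" using key by blast
      thus False using pq ij ij' ab \<open>y = y'\<close> by auto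
    qed
  qed
  have main: "card {S\<in>Pow U. \<forall>j\<in>J. S \<inter> D j \<in> G j} * 2^(\<Sum>j\<in>J. card (D j))
         = (\<Prod>j\<in>J. card (G j)) * 2^card U"
    by (rule card_blocks[OF finJ finU DU GD disj])
  have cD: "\<forall>j\<in>J. card (D j) = 2"
  proof
    fix j assume "j \<in> J"
    then obtain i y where j: "j = (i,y)" "i < k" unfolding J_def by auto
    have "xs!i \<noteq> xs!(k+i)" using xs(1,2) j(2) nth_eq_iff_index_eq by fastforce
    hence "\<sigma> (xs!i, y) \<noteq> \<sigma> (xs!(k+i), y)" using inj by (auto dest: injD)
    thus "card (D j) = 2" unfolding D_def j by simp
  qed
  have cG: "\<forall>j\<in>J. card (G j) \<le> 3" unfolding G_def using card_le3 by auto
  have cJ: "card J = k * card Y0" unfolding J_def by (simp add: card_cartesian_product)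
  have sumD: "(\<Sum>j\<in>J. card (D j)) = 2 * card J" using cD by simp
  have prodG: "(\<Prod>j\<in>J. card (G j)) \<le> 3 ^ card J"
  proof -
    have "(\<Prod>j\<in>J. card (G j)) \<le> (\<Prod>j\<in>J. (3::nat))" using cG by (intro prod_mono) auto
    thus ?thesis by simp
  qed
  have cU: "card U = n * n" unfolding U_def by (simp add: card_cartesian_product)
  have seteq: "{S\<in>Pow U. \<forall>j\<in>J. S \<inter> D j \<in> G j} = Pow ({..<n}\<times>{..<n}) \<inter> Ev \<sigma> k xs Y0"
    unfolding J_def D_def G_def U_def by (rule seteq_lemma)
  define c where "c = card (Pow ({..<n}\<times>{..<n}) \<inter> Ev \<sigma> k xs Y0)"
  define m where "m = card J"
  have e1: "c * 2^(2*m) = (\<Prod>j\<in>J. card (G j)) * 2^(n*n)"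
    using main unfolding seteq sumD cU c_def m_def .
  have "(2::nat)^(2*m) = 4^m" by (simp add: power_mult)
  hence "c * 4^m = (\<Prod>j\<in>J. card (G j)) * 2^(n*n)" using e1 by simp
  hence "c * 4^m \<le> 3^m * 2^(n*n)" using prodG unfolding m_def by simp
  hence h: "real c * 4^m \<le> 3^m * 2^(n*n)" using of_nat_mono by fastforce
  have "real c \<le> 3^m * 2^(n*n) / 4^m" using h by (simp add: pos_le_divide_eq)
  also have "\<dots> = 2^(n*n) * (3/4)^m" by (simp add: power_divide)
  finally show ?thesis unfolding c_def m_def cJ .
qed




definition gen_nocyc :: "(nat\<times>nat \<Rightarrow> nat\<times>nat) \<Rightarrow> (nat\<times>nat) set \<Rightarrow> nat set \<Rightarrow> nat set \<Rightarrow> bool" where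
  "gen_nocyc \<sigma> S A C \<longleftrightarrow> (\<forall>u\<in>A. \<forall>u'\<in>A. \<forall>v\<in>C. \<forall>v'\<in>C.
     \<not> (\<sigma> (u,v) \<in> S \<and> \<sigma> (u',v) \<notin> S \<and> \<sigma> (u',v') \<in> S \<and> \<sigma> (u,v') \<notin> S))"

definition Lst :: "nat \<Rightarrow> nat \<Rightarrow> nat list set" where
  "Lst n m = {xs. set xs \<subseteq> {..<n} \<and> length xs = m}"

definition Bad :: "(nat\<times>nat \<Rightarrow> nat\<times>nat) \<Rightarrow> nat \<Rightarrow> (nat\<times>nat) set set" where
  "Bad \<sigma> n = (\<Union>k\<in>{k. 1 \<le> k \<and> 4*k \<le> n+2}. \<Union>xs\<in>{xs\<in>Lst n (2*k). distinct xs}.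
      \<Union>zs\<in>Lst n (2*k-1). Ev \<sigma> k xs ({..<n} - set zs))"

lemma comparable:
  assumes "gen_nocyc \<sigma> S A C" "a \<in> A" "b \<in> A"
  shows "(\<forall>c\<in>C. \<sigma> (a,c) \<in> S \<longrightarrow> \<sigma> (b,c) \<in> S) \<or> (\<forall>c\<in>C. \<sigma> (b,c) \<in> S \<longrightarrow> \<sigma> (a,c) \<in> S)"
proof (rule ccontr)
  assume "\<not> ?thesis"
  then obtain c c' where "c \<in> C" "\<sigma> (a,c) \<in> S" "\<sigma> (b,c) \<notin> S" "c' \<in> C" "\<sigma> (b,c') \<in> S" "\<sigma> (a,c') \<notin> S"
    by blast
  thus False using assms unfolding gen_nocyc_def by blast
qed

lemma key:
  assumes A: "A \<subseteq> {..<n}" and C: "C \<subseteq> {..<n}" and le: "card A \<le> card C"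
    and sz: "n + 2 \<le> card A + card C" and nc: "gen_nocyc \<sigma> S A C"
  shows "S \<in> Bad \<sigma> n"
proof -
  have finA: "finite A" and finC: "finite C" using A C finite_subset by blast+
  have cC: "card C \<le> n" using C card_mono[of "{..<n}" C] by simp
  have cA: "card A \<le> n" using A card_mono[of "{..<n}" A] by simp
  define a' where "a' = n + 2 - card C"
  have a'2: "2 \<le> a'" "a' \<le> card A" using cC sz unfolding a'_def by linarith+
  define k where "k = a' div 2"
  have k: "1 \<le> k" "2*k \<le> a'" "a' \<le> 2*k+1" "4*k \<le> n+2" using a'2 le sz cC unfolding k_def a'_def by linarith+
  have n1: "1 \<le> n" using a'2 cA by linarith
  define Z where "Z = {..<n} - C"
  have cZ: "card Z = n - card C" unfolding Z_def using C by (simp add: card_Diff_subset finC)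
  have cZ2: "card Z \<le> 2*k-1" using cZ k a'2 unfolding a'_def by linarith
  define zs where "zs = sorted_list_of_set Z @ replicate (2*k-1-card Z) 0"
  have finZ: "finite Z" unfolding Z_def by simp
  have "set zs \<subseteq> {..<n}"
  proof -
    have "set (sorted_list_of_set Z) = Z" using finZ by simp
    moreover have "Z \<subseteq> {..<n}" unfolding Z_def by blast
    moreover have "set (replicate (2*k-1-card Z) (0::nat)) \<subseteq> {..<n}" using n1 by auto
    ultimately show ?thesis unfolding zs_def by auto
  qed
  moreover have "length zs = 2*k-1" unfolding zs_def using cZ2 finZ by simp
  ultimately have zsL: "zs \<in> Lst n (2*k-1)" unfolding Lst_def by simp
  have Zzs: "Z \<subseteq> set zs" unfolding zs_def using finZ by auto
  define Y0 where "Y0 = {..<n} - set zs"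
  have Y0C: "Y0 \<subseteq> C" using Zzs unfolding Y0_def Z_def by blast
  have finY0: "finite Y0" unfolding Y0_def by simp
  have "2*k \<le> card A" using a'2 k by linarith
  then obtain A' where A': "A' \<subseteq> A" "card A' = 2*k" "finite A'"
    by (rule obtain_subset_with_card_n)
  define f where "f = (\<lambda>x. card {y\<in>Y0. \<sigma> (x,y) \<in> S})"
  define xs where "xs = sort_key f (sorted_list_of_set A')"
  have xs: "distinct xs" "set xs = A'" "length xs = 2*k"
    unfolding xs_def using A' by (simp_all add: distinct_sort length_sort)
  have xsL: "xs \<in> {xs\<in>Lst n (2*k). distinct xs}" using xs A' A unfolding Lst_def by auto
  have sorted: "sorted (map f xs)" unfolding xs_def by (rule sorted_sort_key)
  have "S \<in> Ev \<sigma> k xs Y0"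
    unfolding Ev_def
  proof (intro CollectI allI impI ballI notI)
    fix i y assume i: "i < k" and y: "y \<in> Y0" and bad: "\<sigma> (xs!i, y) \<in> S \<and> \<sigma> (xs!(k+i), y) \<notin> S"
    define a where "a = xs!i"
    define b where "b = xs!(k+i)"
    have ab: "a \<in> A" "b \<in> A" using xs A' i unfolding a_def b_def by (auto intro!: nth_mem)
    have "(map f xs)!i \<le> (map f xs)!(k+i)"
      using sorted i xs(3) by (intro sorted_nth_mono) auto
    hence fab: "f a \<le> f b" using i xs(3) unfolding a_def b_def by simp
    have "\<not> (\<forall>c\<in>C. \<sigma> (a,c) \<in> S \<longrightarrow> \<sigma> (b,c) \<in> S)" using bad y Y0C unfolding a_def b_def by blast
    hence ba: "\<forall>c\<in>C. \<sigma> (b,c) \<in> S \<longrightarrow> \<sigma> (a,c) \<in> S" using comparable[OF nc ab] by blast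
    have "{y\<in>Y0. \<sigma> (b,y) \<in> S} \<subset> {y\<in>Y0. \<sigma> (a,y) \<in> S}"
      using ba Y0C bad y unfolding a_def b_def by blast
    hence "f b < f a" unfolding f_def using finY0 by (intro psubset_card_mono) auto
    thus False using fab by simp
  qed
  thus ?thesis unfolding Bad_def Y0_def using k(1,4) xsL zsL by blast
qed




lemma finite_Lst: "finite (Lst n m)"
  unfolding Lst_def by (rule finite_lists_length_eq) simp

lemma card_Lst: "card (Lst n m) = n ^ m"
  unfolding Lst_def using card_lists_length_eq[of "{..<n}" m] by simp

lemma pow_ineq:
  assumes "n \<le> 2*m"
  shows "(3/4::real)^(k*m) \<le> ((9/10)^n)^k"
proof -
  have "(3/4::real)^m \<le> (81/100)^m" by (rule power_mono) auto
  also have "(81/100::real)^m = (9/10)^(2*m)" by (simp add: power_mult power2_eq_square)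
  also have "\<dots> \<le> (9/10)^n" using assms by (intro power_decreasing) auto
  finally have "(3/4::real)^m \<le> (9/10)^n" .
  hence "((3/4::real)^m)^k \<le> ((9/10)^n)^k" by (intro power_mono) auto
  thus ?thesis by (metis power_mult mult.commute)
qed

lemma bound_k:
  fixes \<sigma> :: "nat\<times>nat \<Rightarrow> nat\<times>nat"
  assumes inj: "inj \<sigma>" and sU: "\<forall>p \<in> {..<n}\<times>{..<n}. \<sigma> p \<in> {..<n}\<times>{..<n}"
    and k: "1 \<le> k" "4*k \<le> n+2"
  shows "real (card (\<Union>xs\<in>{xs\<in>Lst n (2*k). distinct xs}. \<Union>zs\<in>Lst n (2*k-1).
            Pow ({..<n}\<times>{..<n}) \<inter> Ev \<sigma> k xs ({..<n} - set zs)))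
         \<le> 2^(n*n) * (real n^4 * (9/10)^n)^k"
proof -
  define L1 where "L1 = {xs\<in>Lst n (2*k). distinct xs}"
  define L2 where "L2 = Lst n (2*k-1)"
  define B where "B = (2::real)^(n*n) * ((9/10)^n)^k"
  define F where "F = (\<lambda>xs zs. Pow ({..<n}\<times>{..<n}) \<inter> Ev \<sigma> k xs ({..<n} - set zs))"
  have finL1: "finite L1" unfolding L1_def using finite_Lst by simp
  have finL2: "finite L2" unfolding L2_def using finite_Lst by simp
  have cL1: "card L1 \<le> n^(2*k)" unfolding L1_def using card_mono[OF finite_Lst, of "{xs\<in>Lst n (2*k). distinct xs}" n "2*k"]
    card_Lst by auto
  have cL2: "card L2 = n^(2*k-1)" unfolding L2_def by (rule card_Lst)
  have each: "real (card (F xs zs)) \<le> B" if xs: "xs \<in> L1" and zs: "zs \<in> L2" for xs zs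
  proof -
    have xs': "distinct xs" "length xs = 2*k" "set xs \<subseteq> {..<n}" using xs unfolding L1_def Lst_def by auto
    have zs': "length zs = 2*k-1" using zs unfolding L2_def Lst_def by auto
    define Y0 where "Y0 = {..<n} - set zs"
    have "card {..<n} - card (set zs) \<le> card Y0" unfolding Y0_def by (rule diff_card_le_card_Diff) simp
    moreover have "card (set zs) \<le> 2*k-1" using card_length[of zs] zs' by simp
    ultimately have "n \<le> 2 * card Y0" using k by simp
    hence "(3/4::real)^(k * card Y0) \<le> ((9/10)^n)^k" by (rule pow_ineq)
    moreover have "real (card (F xs zs)) \<le> 2^(n*n) * (3/4)^(k * card Y0)"
      unfolding F_def Y0_def by (rule ev_bound[OF inj sU xs']) auto
    ultimately show ?thesis unfolding B_def by (smt (verit) mult_left_mono zero_le_power)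
  qed
  have "card (\<Union>xs\<in>L1. \<Union>zs\<in>L2. F xs zs) \<le> (\<Sum>xs\<in>L1. card (\<Union>zs\<in>L2. F xs zs))"
    by (rule card_UN_le[OF finL1])
  also have "\<dots> \<le> (\<Sum>xs\<in>L1. \<Sum>zs\<in>L2. card (F xs zs))"
    by (intro sum_mono card_UN_le[OF finL2])
  finally have "real (card (\<Union>xs\<in>L1. \<Union>zs\<in>L2. F xs zs)) \<le> real (\<Sum>xs\<in>L1. \<Sum>zs\<in>L2. card (F xs zs))"
    by (rule of_nat_mono)
  also have "\<dots> = (\<Sum>xs\<in>L1. \<Sum>zs\<in>L2. real (card (F xs zs)))" by simp
  also have "\<dots> \<le> (\<Sum>xs\<in>L1. \<Sum>zs\<in>L2. B)" using each by (intro sum_mono) auto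
  also have "\<dots> = real (card L1) * real (card L2) * B" by simp
  also have "\<dots> \<le> real n^(2*k) * real n^(2*k) * B"
  proof -
    have n1: "1 \<le> n" using k by linarith
    have "real (card L1) \<le> real n^(2*k)" using cL1 by (metis of_nat_le_iff of_nat_power)
    moreover have "real (card L2) \<le> real n^(2*k)"
    proof -
      have "n^(2*k-1) \<le> n^(2*k)" using n1 by (intro power_increasing) auto
      thus ?thesis using cL2 by (metis of_nat_le_iff of_nat_power)
    qed
    moreover have "B \<ge> 0" unfolding B_def by simp
    ultimately show ?thesis by (intro mult_right_mono mult_mono) auto
  qed
  also have "\<dots> = 2^(n*n) * (real n^4 * (9/10)^n)^k"
  proof -
    have "real n^(2*k) * real n^(2*k) = real n^(2*k+2*k)" by (rule power_add[symmetric])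
    also have "2*k+2*k = 4*k" by simp
    also have "real n^(4*k) = (real n^4)^k" by (rule power_mult)
    finally have e: "real n^(2*k) * real n^(2*k) = (real n^4)^k" .
    show ?thesis unfolding e B_def by (simp add: power_mult_distrib)
  qed
  finally show ?thesis unfolding L1_def L2_def F_def .
qed




lemma bad_bound:
  fixes \<sigma> :: "nat\<times>nat \<Rightarrow> nat\<times>nat"
  assumes inj: "inj \<sigma>" and sU: "\<forall>p \<in> {..<n}\<times>{..<n}. \<sigma> p \<in> {..<n}\<times>{..<n}"
    and n1: "1 \<le> n" and q1: "real n^4 * (9/10)^n \<le> 1"
  shows "real (card (Pow ({..<n}\<times>{..<n}) \<inter> Bad \<sigma> n)) \<le> 2^(n*n) * (real n * (real n^4 * (9/10)^n))"
proof -
  define q where "q = real n^4 * (9/10)^n"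
  define K where "K = {k. 1 \<le> k \<and> 4*k \<le> n+2}"
  define H where "H = (\<lambda>k. \<Union>xs\<in>{xs\<in>Lst n (2*k). distinct xs}. \<Union>zs\<in>Lst n (2*k-1).
            Pow ({..<n}\<times>{..<n}) \<inter> Ev \<sigma> k xs ({..<n} - set zs))"
  have KS: "K \<subseteq> {1..n}" unfolding K_def using n1 by auto
  have finK: "finite K" using KS finite_subset by blast
  have cK: "card K \<le> n" using card_mono[OF _ KS] by simp
  have eq: "Pow ({..<n}\<times>{..<n}) \<inter> Bad \<sigma> n = (\<Union>k\<in>K. H k)"
    unfolding Bad_def K_def H_def by blast
  have q0: "0 \<le> q" unfolding q_def by simp
  have "card (\<Union>k\<in>K. H k) \<le> (\<Sum>k\<in>K. card (H k))" by (rule card_UN_le[OF finK])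
  hence "real (card (\<Union>k\<in>K. H k)) \<le> (\<Sum>k\<in>K. real (card (H k)))"
    by (metis of_nat_mono of_nat_sum)
  also have "\<dots> \<le> (\<Sum>k\<in>K. 2^(n*n) * q)"
  proof (intro sum_mono)
    fix k assume k: "k \<in> K"
    have "real (card (H k)) \<le> 2^(n*n) * q^k"
      unfolding H_def q_def using bound_k[OF inj sU] k unfolding K_def by auto
    also have "q^k \<le> q^1" using k q0 q1 unfolding K_def q_def by (intro power_decreasing) auto
    finally show "real (card (H k)) \<le> 2^(n*n) * q" by simp
  qed
  also have "\<dots> = real (card K) * (2^(n*n) * q)" by simp
  also have "\<dots> \<le> real n * (2^(n*n) * q)" using cK q0 by (intro mult_right_mono) auto
  finally show ?thesis unfolding eq q_def by (simp add: mult_ac)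
qed

lemma cyc4:
  assumes fas: "feedback_arc_set (bip_tournament n S) F"
    and lt: "a < n" "a' < n" "c < n" "c' < n"
    and S: "(a,c) \<in> S" "(a',c) \<notin> S" "(a',c') \<in> S" "(a,c') \<notin> S"
  shows "((False,a),(True,c)) \<in> F \<or> ((True,c),(False,a')) \<in> F \<or>
         ((False,a'),(True,c')) \<in> F \<or> ((True,c'),(False,a)) \<in> F"
proof -
  define vs where "vs = [(False,a),(True,c),(False,a'),(True,c')]"
  have ne: "a \<noteq> a'" "c \<noteq> c'" using S by auto
  have four: "i < 4 \<Longrightarrow> i = 0 \<or> i = 1 \<or> i = 2 \<or> i = (3::nat)" for i by arith
  have dc: "directed_cycle (bip_tournament n S) vs"
    unfolding directed_cycle_def
  proof (intro conjI allI impI)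
    show "vs \<noteq> []" unfolding vs_def by simp
    show "distinct vs" unfolding vs_def using ne by simp
    fix i assume "i < length vs"
    hence "i < 4" unfolding vs_def by simp
    thus "(vs ! i, vs ! ((i + 1) mod length vs)) \<in> bip_tournament n S"
      using four[of i] lt S unfolding vs_def bip_tournament_def by auto
  qed
  hence "cycle_edges vs \<inter> F \<noteq> {}" using fas unfolding feedback_arc_set_def by blast
  moreover have "cycle_edges vs \<subseteq> {((False,a),(True,c)), ((True,c),(False,a')),
         ((False,a'),(True,c')), ((True,c'),(False,a))}"
  proof
    fix e assume "e \<in> cycle_edges vs"
    have l4: "length vs = 4" unfolding vs_def by simp
    obtain i where i: "i < length vs" "e = (vs ! i, vs ! ((i + 1) mod length vs))"
      using \<open>e \<in> cycle_edges vs\<close> unfolding cycle_edges_def by blast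
    hence i: "i < 4" "e = (vs ! i, vs ! ((i + 1) mod 4))" unfolding l4 by auto
    thus "e \<in> {((False,a),(True,c)), ((True,c),(False,a')),
         ((False,a'),(True,c')), ((True,c'),(False,a))}"
      using four[of i] unfolding vs_def by auto
  qed
  ultimately show ?thesis by blast
qed




lemma det:
  assumes SU: "S \<subseteq> {..<n}\<times>{..<n}" and b1: "S \<notin> Bad id n" and b2: "S \<notin> Bad prod.swap n"
  shows "good_property n S"
  unfolding good_property_def
proof (intro allI impI)
  fix F assume "minimal_feedback_arc_set (bip_tournament n S) F"
  hence fas: "feedback_arc_set (bip_tournament n S) F" by (simp add: minimal_feedback_arc_set_def)
  define ein where "ein = (\<lambda>a b. if (a,b) \<in> S then ((False,a),(True,b)) else ((True,b),(False,a)))"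
  have ein_ends: "{fst (ein a b), snd (ein a b)} = {(False,a),(True,b)}" for a b
    unfolding ein_def by auto
  define G where "G = (\<lambda>a. insert n {b. b < n \<and> ein a b \<in> F})"
  show "\<exists>M\<subseteq>F. is_matching M \<and> card M = n - 1"
  proof (cases "\<forall>X\<subseteq>{..<n}. card X \<le> card (\<Union>(G ` X))")
    case True
    have finG: "\<forall>a\<in>{..<n}. finite (G a)" unfolding G_def by auto
    obtain f where f: "inj_on f {..<n}" "\<forall>a\<in>{..<n}. f a \<in> G a"
      using hall[OF _ finG True] by auto
    define A2 where "A2 = {a\<in>{..<n}. f a \<noteq> n}"
    have c1: "card {a\<in>{..<n}. f a = n} \<le> Suc 0"
      using f(1) by (subst card_le_Suc0_iff_eq) (auto simp: inj_on_def)
    have "{..<n} = A2 \<union> {a\<in>{..<n}. f a = n}" unfolding A2_def by auto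
    hence "n \<le> card A2 + card {a\<in>{..<n}. f a = n}"
      by (metis card_Un_le card_lessThan)
    hence cA2: "n - 1 \<le> card A2" using c1 by linarith
    obtain A3 where A3: "A3 \<subseteq> A2" "card A3 = n - 1" "finite A3"
      using obtain_subset_with_card_n[OF cA2] by blast
    define M where "M = (\<lambda>a. ein a (f a)) ` A3"
    have "M \<subseteq> F"
    proof
      fix e assume "e \<in> M"
      then obtain a where a: "a \<in> A3" "e = ein a (f a)" unfolding M_def by auto
      have "a \<in> A2" using a A3 by auto
      hence "f a \<in> G a" "f a \<noteq> n" "a < n" using f unfolding A2_def by auto
      thus "e \<in> F" using a unfolding G_def by auto
    qed
    moreover have injM: "inj_on (\<lambda>a. ein a (f a)) A3"
    proof (rule inj_onI)
      fix a b assume "ein a (f a) = ein b (f b)"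
      thus "a = b" unfolding ein_def by (auto split: if_splits)
    qed
    hence "card M = n - 1" unfolding M_def using A3 by (simp add: card_image)
    moreover have "is_matching M"
      unfolding is_matching_def
    proof (intro ballI impI)
      fix e e' assume e: "e \<in> M" and e': "e' \<in> M" and ne: "e \<noteq> e'"
      obtain a where a: "a \<in> A3" "e = ein a (f a)" using e unfolding M_def by auto
      obtain b where b: "b \<in> A3" "e' = ein b (f b)" using e' unfolding M_def by auto
      have "a \<noteq> b" using a b ne by auto
      moreover have "a < n" "b < n" using a b A3 unfolding A2_def by auto
      ultimately have "f a \<noteq> f b" using f(1) unfolding inj_on_def by auto
      thus "{fst e, snd e} \<inter> {fst e', snd e'} = {}" unfolding a b ein_ends using \<open>a \<noteq> b\<close> by auto
    qed
    ultimately show ?thesis by blast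
  next
    case False
    then obtain X where X: "X \<subseteq> {..<n}" "card (\<Union>(G ` X)) < card X" by auto
    have finX: "finite X" using X(1) finite_subset by blast
    have Xne: "X \<noteq> {}" using X(2) by auto
    define N where "N = {b. b < n \<and> (\<exists>a\<in>X. ein a b \<in> F)}"
    have "\<Union>(G ` X) = insert n N" unfolding G_def N_def using Xne by auto
    moreover have "n \<notin> N" "finite N" unfolding N_def by auto
    ultimately have "card (\<Union>(G ` X)) = card N + 1" by simp
    hence cN: "card N + 2 \<le> card X" using X(2) by linarith
    define Y where "Y = {..<n} - N"
    have NS: "N \<subseteq> {..<n}" unfolding N_def by auto
    have cY: "card Y = n - card N" unfolding Y_def using NS by (simp add: card_Diff_subset \<open>finite N\<close>)
    have cX: "card X \<le> n" using card_mono[OF _ X(1)] by simp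
    have sz: "n + 2 \<le> card X + card Y" using cY cN cX by linarith
    have Yn: "Y \<subseteq> {..<n}" unfolding Y_def by auto
    have noF: "ein x y \<notin> F" if "x \<in> X" "y \<in> Y" for x y
      using that unfolding Y_def N_def by auto
    have nocyc: "False" if "a \<in> X" "a' \<in> X" "c \<in> Y" "c' \<in> Y"
       "(a,c) \<in> S" "(a',c) \<notin> S" "(a',c') \<in> S" "(a,c') \<notin> S" for a a' c c'
    proof -
      have lt: "a < n" "a' < n" "c < n" "c' < n" using that X(1) Yn by auto
      have "ein a c \<notin> F" "ein a' c \<notin> F" "ein a' c' \<notin> F" "ein a c' \<notin> F" using noF that by auto
      hence "((False,a),(True,c)) \<notin> F" "((True,c),(False,a')) \<notin> F"
         "((False,a'),(True,c')) \<notin> F" "((True,c'),(False,a)) \<notin> F"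
        using that unfolding ein_def by auto
      thus False using cyc4[OF fas lt that(5-8)] by blast
    qed
    show ?thesis
    proof (cases "card X \<le> card Y")
      case True
      have "gen_nocyc id S X Y" unfolding gen_nocyc_def using nocyc by auto
      hence "S \<in> Bad id n" using key[OF X(1) Yn True sz] by blast
      thus ?thesis using b1 by blast
    next
      case False
      have "gen_nocyc prod.swap S Y X" unfolding gen_nocyc_def using nocyc by auto
      hence "S \<in> Bad prod.swap n" using key[OF Yn X(1) _ ] False sz by (simp add: add.commute)
      thus ?thesis using b2 by blast
    qed
  qed
qed

theorem proposition3p1:
  shows "(\<lambda>n. measure_pmf.prob (pmf_of_set (orientations n)) {S. good_property n S})
           \<longlonglongrightarrow> 1"
proof -
  define q where "q = (\<lambda>n::nat. real n^4 * (9/10)^n)"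
  have q0: "q \<longlonglongrightarrow> 0" unfolding q_def by real_asymp
  have ev1: "eventually (\<lambda>n. q n \<le> 1) sequentially"
    using order_tendstoD(2)[OF q0, of 1] by (auto elim: eventually_mono)
  have ev2: "eventually (\<lambda>n. 1 \<le> n) sequentially" by (rule eventually_ge_at_top)
  have lim: "(\<lambda>n. 1 - 2 * (real n * q n)) \<longlonglongrightarrow> 1" unfolding q_def by real_asymp
  have lower: "1 - 2 * (real n * q n) \<le> measure_pmf.prob (pmf_of_set (orientations n)) {S. good_property n S}"
    if n1: "1 \<le> n" and qn: "q n \<le> 1" for n
  proof -
    define P where "P = Pow ({..<n}\<times>{..<n})"
    have oP: "orientations n = P" unfolding orientations_def P_def ..
    have finP: "finite P" "P \<noteq> {}" unfolding P_def by auto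
    have cP: "card P = 2^(n*n)" unfolding P_def by (simp add: card_Pow card_cartesian_product)
    define B1 where "B1 = P \<inter> Bad id n"
    define B2 where "B2 = P \<inter> Bad prod.swap n"
    have injs: "inj (id :: nat\<times>nat \<Rightarrow> _)" "inj (prod.swap :: nat\<times>nat \<Rightarrow> _)" by (auto simp: inj_def)
    have sUs: "\<forall>p \<in> {..<n}\<times>{..<n}. id p \<in> {..<n}\<times>{..<n}"
              "\<forall>p \<in> {..<n}\<times>{..<n}. prod.swap p \<in> {..<n}\<times>{..<n}" by auto
    have qn': "real n^4 * (9/10)^n \<le> 1" using qn unfolding q_def .
    have bB1: "real (card B1) \<le> 2^(n*n) * (real n * q n)"
      unfolding B1_def P_def q_def by (rule bad_bound[OF injs(1) sUs(1) n1 qn'])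
    have bB2: "real (card B2) \<le> 2^(n*n) * (real n * q n)"
      unfolding B2_def P_def q_def by (rule bad_bound[OF injs(2) sUs(2) n1 qn'])
    define Gd where "Gd = P \<inter> {S. good_property n S}"
    have "P \<subseteq> Gd \<union> (B1 \<union> B2)"
      unfolding Gd_def B1_def B2_def using det unfolding P_def by blast
    hence "card P \<le> card (Gd \<union> (B1 \<union> B2))" using finP by (intro card_mono) (auto simp: Gd_def B1_def B2_def)
    also have "\<dots> \<le> card Gd + (card B1 + card B2)" by (metis card_Un_le add_left_mono order_trans)
    finally have "real (card P) \<le> real (card Gd) + real (card B1) + real (card B2)" by linarith
    hence "2^(n*n) * (1 - 2 * (real n * q n)) \<le> real (card Gd)" using bB1 bB2 cP by (simp add: algebra_simps)
    hence "1 - 2 * (real n * q n) \<le> real (card Gd) / 2^(n*n)" by (simp add: field_simps)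
    also have "\<dots> = measure_pmf.prob (pmf_of_set (orientations n)) {S. good_property n S}"
      unfolding oP measure_pmf_of_set[OF finP(2) finP(1)] Gd_def cP by simp
    finally show ?thesis .
  qed
  show ?thesis
  proof (rule tendsto_sandwich[OF _ _ lim tendsto_const])
    show "eventually (\<lambda>n. 1 - 2 * (real n * q n) \<le> measure_pmf.prob (pmf_of_set (orientations n)) {S. good_property n S}) sequentially"
      using eventually_conj[OF ev1 ev2] by (rule eventually_mono) (use lower in auto)
    show "eventually (\<lambda>n. measure_pmf.prob (pmf_of_set (orientations n)) {S. good_property n S} \<le> 1) sequentially"
      by (simp add: measure_pmf.prob_le_1)
  qed
qed


end
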